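(* Let $R\in(0,\pi/2)$ and let $\boldsymbol f=(f_1,f_2)$ be the solution on $(0,\pi)$ of \[\boldsymbol f'=\frac{1}{\sin s}\begin{pmatrix}-3\cos s&3\cos s\\ \cos R-\cos s&\cos s-\cos R\end{pmatrix}\boldsymbol f,\qquad \boldsymbol f(R)\sin^4R=\cos R\,(3,2).\] Then $h(s):=f_2(s)\sin^3s$ is nonnegative on $[R,\pi)$. *)

theory Defs
  imports "HOL-Analysis.Analysis"
begin

end

theory Submission
  imports Defs
begin

theorem lemma3p6:
  fixes R :: real and f1 f2 :: "real \<Rightarrow> real"
  assumes R: "0 < R" "R < pi / 2"
    and ode1: "\<And>s. s \<in> {0<..<pi} \<Longrightarrow>
      (f1 has_real_derivative ((-3 * cos s * f1 s + 3 * cos s * f2 s) / sin s)) (at s)"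
    and ode2: "\<And>s. s \<in> {0<..<pi} \<Longrightarrow>
      (f2 has_real_derivative (((cos R - cos s) * f1 s + (cos s - cos R) * f2 s) / sin s)) (at s)"
    and init1: "f1 R * sin R ^ 4 = cos R * 3"
    and init2: "f2 R * sin R ^ 4 = cos R * 2"
  shows "\<forall>s \<in> {R..<pi}. f2 s * sin s ^ 3 \<ge> 0"
proof -
  define w where "w s = (f2 s - f1 s) * sin s ^ 2 * exp (cos R * (ln (1 - cos s) - ln (sin s)))" for s
  have sinpos: "sin s > 0" if "s \<in> {0<..<pi}" for s using that by (auto intro: sin_gt_zero)
  have cos1: "cos s < 1" if "s \<in> {0<..<pi}" for s
  proof -
    have "cos s \<noteq> 1" using that sinpos[OF that] by (metis less_irrefl sin_cos_squared_add zero_less_power2 power2_eq_1_iff cancel_comm_monoid_add_class.diff_cancel add_diff_cancel_right' power_one diff_self)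
    then show ?thesis using cos_le_one[of s] by linarith
  qed
  have wd: "(w has_real_derivative 0) (at s)" if s: "s \<in> {0<..<pi}" for s
  proof -
    have sp: "sin s > 0" using sinpos[OF s] .
    have c1: "1 - cos s > 0" using cos1[OF s] by simp
    define E where "E s = exp (cos R * (ln (1 - cos s) - ln (sin s)))" for s
    define A1 where "A1 = (-3 * cos s * f1 s + 3 * cos s * f2 s) / sin s"
    define A2 where "A2 = ((cos R - cos s) * f1 s + (cos s - cos R) * f2 s) / sin s"
    have l1: "((\<lambda>s. ln (1 - cos s)) has_real_derivative sin s / (1 - cos s)) (at s)"
      by (rule derivative_eq_intros refl | simp add: sp c1 cos1[OF s])+
    have l2: "((\<lambda>s. ln (sin s)) has_real_derivative cos s / sin s) (at s)"
      by (rule derivative_eq_intros refl | simp add: sp)+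
    have dE: "(E has_real_derivative E s * (cos R * (sin s / (1 - cos s) - cos s / sin s))) (at s)"
      unfolding E_def by (rule DERIV_fun_exp, rule DERIV_cmult, rule DERIV_diff[OF l1 l2])
    have dg: "((\<lambda>s. f2 s - f1 s) has_real_derivative A2 - A1) (at s)"
      unfolding A1_def A2_def by (rule DERIV_diff[OF ode2[OF s] ode1[OF s]])
    have dS: "((\<lambda>s. sin s ^ 2) has_real_derivative 2 * sin s * cos s) (at s)"
      by (rule derivative_eq_intros refl | simp)+
    have wE: "w = (\<lambda>s. (f2 s - f1 s) * sin s ^ 2 * E s)" unfolding w_def E_def by auto
    note d = DERIV_mult[OF DERIV_mult[OF dg dS] dE]
    have z: "((A2 - A1) * (sin s)\<^sup>2 + 2 * sin s * cos s * (f2 s - f1 s)) * E s +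
       E s * (cos R * (sin s / (1 - cos s) - cos s / sin s)) * ((f2 s - f1 s) * (sin s)\<^sup>2) = 0"
    proof -
      have "sin s ^ 2 = 1 - cos s ^ 2" by (simp add: sin_squared_eq)
      then show ?thesis using sp c1 unfolding A1_def A2_def by (simp add: field_simps power2_eq_square)
    qed
    show ?thesis unfolding wE using d z by simp
  qed
  have Rin: "R \<in> {0<..<pi}" using R pi_gt3 by auto
  have cR: "cos R > 0" using R by (intro cos_gt_zero) auto
  have sR4: "sin R ^ 4 > 0" using sinpos[OF Rin] by simp
  have gR: "f2 R - f1 R < 0"
  proof (rule ccontr)
    assume "\<not> f2 R - f1 R < 0"
    then have "(f2 R - f1 R) * sin R ^ 4 \<ge> 0" using sR4 by simp
    moreover have "(f2 R - f1 R) * sin R ^ 4 = - cos R" using init1 init2 by (simp add: algebra_simps)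
    ultimately show False using cR by linarith
  qed
  have g: "f2 t - f1 t < 0" if t: "R \<le> t" "t < pi" for t
  proof (cases "t = R")
    case True then show ?thesis using gR by simp
  next
    case False
    have tR: "R < t" using t False by simp
    have wt: "w t = w R"
    proof (rule DERIV_isconst2[of R t])
      show "R < t" by fact
      show "continuous_on {R..t} w"
      proof (intro continuous_at_imp_continuous_on ballI)
        fix x assume "x \<in> {R..t}"
        then have "x \<in> {0<..<pi}" using R t by auto
        then show "isCont w x" using wd DERIV_isCont by blast
      qed
      show "DERIV w x :> 0" if "R < x" "x < t" for x
      proof -
        have "x \<in> {0<..<pi}" using R t that by auto
        then show "DERIV w x :> 0" using wd by blast
      qed
    qed (use tR in auto)
    have "w R < 0" unfolding w_def using gR sinpos[OF Rin]
      by (simp add: mult_neg_pos)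
    then have wt0: "w t < 0" using wt by simp
    have tin: "t \<in> {0<..<pi}" using t R by auto
    have P: "sin t ^ 2 * exp (cos R * (ln (1 - cos t) - ln (sin t))) > 0"
      using sinpos[OF tin] by simp
    show ?thesis
    proof (rule ccontr)
      assume "\<not> f2 t - f1 t < 0"
      then have "(f2 t - f1 t) * (sin t ^ 2 * exp (cos R * (ln (1 - cos t) - ln (sin t)))) \<ge> 0"
        using P by simp
      then show False using wt0 unfolding w_def by (simp add: mult.assoc)
    qed
  qed
  have f2R: "f2 R > 0"
  proof (rule ccontr)
    assume "\<not> f2 R > 0"
    then have "f2 R * sin R ^ 4 \<le> 0" using sR4 by (simp add: mult_nonpos_nonneg)
    then show False using init2 cR by linarith
  qed
  show ?thesis
  proof
    fix s assume s: "s \<in> {R..<pi}"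
    have "f2 R \<le> f2 s"
    proof (rule DERIV_nonneg_imp_nondecreasing[of R s f2])
      show "R \<le> s" using s by simp
      fix x assume x0: "R \<le> x" "x \<le> s"
      then have x: "R \<le> x \<and> x \<le> s" by simp
      have xin: "x \<in> {0<..<pi}" using x s R by auto
      have "cos x \<le> cos R" using x R s by (intro cos_monotone_0_pi_le) auto
      moreover have "f2 x - f1 x < 0" using g x s by auto
      ultimately have "(cos x - cos R) * (f2 x - f1 x) \<ge> 0"
        by (intro mult_nonpos_nonpos) auto
      then have "((cos R - cos x) * f1 x + (cos x - cos R) * f2 x) / sin x \<ge> 0"
        using sinpos[OF xin] by (intro divide_nonneg_pos) (auto simp: algebra_simps)
      then show "\<exists>y. (f2 has_real_derivative y) (at x) \<and> 0 \<le> y" using ode2[OF xin] by blast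
    qed
    moreover have "sin s \<ge> 0" using s R by (intro sin_ge_zero) auto
    ultimately show "f2 s * sin s ^ 3 \<ge> 0" using f2R by simp
  qed
qed

end
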